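(* Let $R$ be a Dedekind domain with $\operatorname{char}(R)\neq3$ and fraction field $K$, and $\mathfrak a$ a fractional ideal of $R$. Let $f\in V_{\mathfrak a}$ with $\operatorname{disc}(f)\ne0$, and let $(S,I,\delta,s)$ be an $\mathfrak a$-balanced quadruple whose image under $\Phi_{\mathfrak a}$ is the $\mathrm{SL}(R\oplus\mathfrak a)$-orbit of $f$. Then $f$ has a zero $(x_0,y_0)\in K^2\setminus\{(0,0)\}$ if and only if $\delta=\gamma^3$ for some $\gamma\in(S\otimes_RK)^\times$.
   Context: $V_{\mathfrak a}=\{ax^3+3bx^2y+3cxy^2+dy^3: a\in\mathfrak a,b\in R,c\in\mathfrak a^{-1},d\in\mathfrak a^{-2}\}$, $\operatorname{disc}(f)=-3b^2c^2+4ac^3+4b^3d+a^2d^2-6abcd$; $\mathrm{SL}(R\oplus\mathfrak a)$ is the group of determinant-one matrices $\begin{pmatrix} r&x\\ y&s\end{pmatrix}$ with $r,s\in R$, $x\in\mathfrak a$, $y\in\mathfrak a^{-1}$, acting by $(g\cdot f)(x,y)=\det(g)^{-1}f((x,y)g)$. A quadratic $R$-algebra is a commutative $R$-algebra that is a rank-2 finitely generated torsion-free $R$-module; $N=N_{S\otimes K/K}$. An $\mathfrak a$-orientation is an isomorphism $\pi:\bigwedge^2S\to\mathfrak a$, equivalently a $\xi$ with $S=R+\mathfrak a\xi$ and $\pi_K(1\wedge\xi)=1$. An $\mathfrak a$-balanced quadruple: $S$ a nondegenerate (nonzero discriminant) $\mathfrak a$-oriented quadratic $R$-algebra, $I$ a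 fractional ideal of $S$, $\delta\in(S\otimes K)^\times$, $s\in K^\times$, with $I^3\subset\delta S$, $[S:I]_R=sR$ (module index) and $s^3=N(\delta)$. $\Phi_{\mathfrak a}(S,I,\delta,s)$ is the orbit of $C(x,y)=\pi_K(1\wedge(\alpha x+\beta y)^3\delta^{-1})$ for any decomposition $I=R\alpha+\mathfrak a\beta$ with $\pi_K(\alpha\wedge\beta)=s$. *)

theory Defs
  imports Main
begin

text \<open>R is modelled as a subset of a field of type 'k which is its fraction field.\<close>

definition subring_of :: "'k::field set \<Rightarrow> bool" where
  "subring_of R \<longleftrightarrow> 0 \<in> R \<and> 1 \<in> R \<and>
     (\<forall>x\<in>R. \<forall>y\<in>R. x + y \<in> R \<and> x * y \<in> R \<and> - x \<in> R)"

definition is_fraction_field :: "'k::field set \<Rightarrow> bool" where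
  "is_fraction_field R \<longleftrightarrow> (\<forall>z. \<exists>x\<in>R. \<exists>y\<in>R. y \<noteq> 0 \<and> z = x / y)"

definition rspan :: "'k::field set \<Rightarrow> 'k set \<Rightarrow> 'k set" where
  "rspan R X = {z. \<exists>F c. finite F \<and> F \<subseteq> X \<and> (\<forall>x\<in>F. c x \<in> R) \<and> z = (\<Sum>x\<in>F. c x * x)}"

definition ideal_of :: "'k::field set \<Rightarrow> 'k set \<Rightarrow> bool" where
  "ideal_of R P \<longleftrightarrow> P \<subseteq> R \<and> 0 \<in> P \<and> (\<forall>x\<in>P. \<forall>y\<in>P. x + y \<in> P) \<and>
     (\<forall>r\<in>R. \<forall>x\<in>P. r * x \<in> P)"

definition prime_ideal_of :: "'k::field set \<Rightarrow> 'k set \<Rightarrow> bool" where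
  "prime_ideal_of R P \<longleftrightarrow> ideal_of R P \<and> P \<noteq> R \<and>
     (\<forall>x\<in>R. \<forall>y\<in>R. x * y \<in> P \<longrightarrow> x \<in> P \<or> y \<in> P)"

definition maximal_ideal_of :: "'k::field set \<Rightarrow> 'k set \<Rightarrow> bool" where
  "maximal_ideal_of R P \<longleftrightarrow> ideal_of R P \<and> P \<noteq> R \<and>
     (\<forall>Q. ideal_of R Q \<and> P \<subseteq> Q \<longrightarrow> Q = P \<or> Q = R)"

definition noetherian :: "'k::field set \<Rightarrow> bool" where
  "noetherian R \<longleftrightarrow> (\<forall>P. ideal_of R P \<longrightarrow> (\<exists>F. finite F \<and> F \<subseteq> P \<and> P = rspan R F))"

definition integrally_closed :: "'k::field set \<Rightarrow> bool" where
  "integrally_closed R \<longleftrightarrow>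
     (\<forall>z. (\<exists>m::nat. \<exists>c::nat \<Rightarrow> 'k. m > 0 \<and> (\<forall>i<m. c i \<in> R) \<and>
            z ^ m + (\<Sum>i<m. c i * z ^ i) = 0) \<longrightarrow> z \<in> R)"

text \<open>Dedekind domain: noetherian, integrally closed, nonzero primes maximal
  (fields are allowed), with K its fraction field.\<close>
definition dedekind_with_frac_field :: "'k::field set \<Rightarrow> bool" where
  "dedekind_with_frac_field R \<longleftrightarrow> subring_of R \<and> is_fraction_field R \<and> noetherian R \<and>
     integrally_closed R \<and>
     (\<forall>P. prime_ideal_of R P \<and> P \<noteq> {0} \<longrightarrow> maximal_ideal_of R P)"

definition frac_ideal :: "'k::field set \<Rightarrow> 'k set \<Rightarrow> bool" where
  "frac_ideal R A \<longleftrightarrow> A \<noteq> {0} \<and> (\<exists>F. finite F \<and> A = rspan R F)"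

definition frac_inv :: "'k::field set \<Rightarrow> 'k set \<Rightarrow> 'k set" where
  "frac_inv R A = {x. \<forall>a\<in>A. x * a \<in> R}"

definition frac_inv2 :: "'k::field set \<Rightarrow> 'k set \<Rightarrow> 'k set" where
  "frac_inv2 R A = {x. \<forall>a\<in>A. \<forall>b\<in>A. x * a * b \<in> R}"

text \<open>A binary cubic form (c0,c1,c2,c3) means c0 x^3 + c1 x^2 y + c2 x y^2 + c3 y^3.\<close>
type_synonym 'k bcf = "'k \<times> 'k \<times> 'k \<times> 'k"

fun bcf_eval :: "'k::comm_ring_1 bcf \<Rightarrow> 'k \<Rightarrow> 'k \<Rightarrow> 'k" where
  "bcf_eval (c0, c1, c2, c3) x y = c0 * x^3 + c1 * x^2 * y + c2 * x * y^2 + c3 * y^3"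

definition Vform :: "'k::comm_ring_1 \<Rightarrow> 'k \<Rightarrow> 'k \<Rightarrow> 'k \<Rightarrow> 'k bcf" where
  "Vform a b c d = (a, 3 * b, 3 * c, d)"

definition bcf_disc :: "'k::comm_ring_1 \<Rightarrow> 'k \<Rightarrow> 'k \<Rightarrow> 'k \<Rightarrow> 'k" where
  "bcf_disc a b c d = - 3 * b^2 * c^2 + 4 * a * c^3 + 4 * b^3 * d + a^2 * d^2 - 6 * a * b * c * d"

text \<open>Matrices g = [[r, u], [v, s]] are 4-tuples (r,u,v,s).
  \<open>SL(R \<oplus> \<aa>)\<close>: r,s in R, u in \<aa>, v in \<aa>^{-1}, det 1.\<close>
definition SL_Ra :: "'k::field set \<Rightarrow> 'k set \<Rightarrow> ('k \<times> 'k \<times> 'k \<times> 'k) set" where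
  "SL_Ra R A = {(r, u, v, s) | r u v s. r \<in> R \<and> s \<in> R \<and> u \<in> A \<and> v \<in> frac_inv R A \<and>
                                    r * s - u * v = 1}"

text \<open>(g.f)(x,y) = det(g)^{-1} f((x,y)g), with (x,y)g = (r x + v y, u x + s y);
  coefficients of the resulting form.\<close>
fun bcf_act :: "'k::field \<times> 'k \<times> 'k \<times> 'k \<Rightarrow> 'k bcf \<Rightarrow> 'k bcf" where
  "bcf_act (r, u, v, s) (c0, c1, c2, c3) =
    (let p = r; q = v; r' = u; s' = s; dt = inverse (r * s - u * v) in
     (dt * (c0 * p^3 + c1 * p^2 * r' + c2 * p * r'^2 + c3 * r'^3),
      dt * (3 * c0 * p^2 * q + c1 * (p^2 * s' + 2 * p * q * r') + c2 * (2 * p * r' * s' + q * r'^2)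
            + 3 * c3 * r'^2 * s'),
      dt * (3 * c0 * p * q^2 + c1 * (2 * p * q * s' + q^2 * r') + c2 * (p * s'^2 + 2 * q * r' * s')
            + 3 * c3 * r' * s'^2),
      dt * (c0 * q^3 + c1 * q^2 * s' + c2 * q * s'^2 + c3 * s'^3)))"

lemma bcf_act_eval:
  "bcf_eval (bcf_act (r, u, v, s) f) x y =
     inverse (r * s - u * v) * bcf_eval f (r * x + v * y) (u * x + s * y)"
  by (cases f) (simp add: Let_def power2_eq_square power3_eq_cube algebra_simps)

text \<open>An \<open>\<aa>\<close>-oriented quadratic R-algebra is S = R + \<open>\<aa>\<close>\<xi> with
  \<xi>^2 = t\<xi> - n, t in \<open>\<aa>\<^sup>-\<^sup>1\<close>, n in \<open>\<aa>\<^sup>-\<^sup>2\<close>.  Elements x + y\<xi> of S\<otimes>K are pairs (x,y).\<close>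

definition qmul :: "'k::field \<Rightarrow> 'k \<Rightarrow> 'k \<times> 'k \<Rightarrow> 'k \<times> 'k \<Rightarrow> 'k \<times> 'k" where
  "qmul t n z w = (fst z * fst w - n * snd z * snd w,
                   fst z * snd w + snd z * fst w + t * snd z * snd w)"

definition qnorm :: "'k::field \<Rightarrow> 'k \<Rightarrow> 'k \<times> 'k \<Rightarrow> 'k" where
  "qnorm t n z = fst z ^ 2 + t * fst z * snd z + n * snd z ^ 2"

definition qinv :: "'k::field \<Rightarrow> 'k \<Rightarrow> 'k \<times> 'k \<Rightarrow> 'k \<times> 'k" where
  "qinv t n z = ((fst z + t * snd z) / qnorm t n z, - snd z / qnorm t n z)"

definition qunit :: "'k::field \<Rightarrow> 'k \<Rightarrow> 'k \<times> 'k \<Rightarrow> bool" where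
  "qunit t n z \<longleftrightarrow> (\<exists>w. qmul t n z w = (1, 0))"

definition qscal :: "'k::field \<Rightarrow> 'k \<times> 'k \<Rightarrow> 'k \<times> 'k" where
  "qscal c z = (c * fst z, c * snd z)"

definition qadd :: "'k::field \<times> 'k \<Rightarrow> 'k \<times> 'k \<Rightarrow> 'k \<times> 'k" where
  "qadd z w = (fst z + fst w, snd z + snd w)"

text \<open>\<open>\<pi>\<^sub>K(z \<and> w)\<close> for the orientation \<open>\<pi>\<^sub>K(1 \<and> \<xi>) = 1\<close>.\<close>
definition qpi :: "'k::field \<times> 'k \<Rightarrow> 'k \<times> 'k \<Rightarrow> 'k" where
  "qpi z w = fst z * snd w - snd z * fst w"

definition quad_alg :: "'k::field set \<Rightarrow> 'k set \<Rightarrow> 'k \<Rightarrow> 'k \<Rightarrow> bool" where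
  "quad_alg R A t n \<longleftrightarrow> t \<in> frac_inv R A \<and> n \<in> frac_inv2 R A"

text \<open>discriminant of the basis 1, \<xi> (up to the ideal factor \<open>\<aa>\<^sup>2\<close>)\<close>
definition qdisc :: "'k::field \<Rightarrow> 'k \<Rightarrow> 'k" where
  "qdisc t n = t^2 - 4 * n"

definition Sset :: "'k::field set \<Rightarrow> 'k set \<Rightarrow> ('k \<times> 'k) set" where
  "Sset R A = {(r, a) | r a. r \<in> R \<and> a \<in> A}"

text \<open>Fractional ideal of S: S-submodule of S\<otimes>K which is a lattice (c I \<subseteq> S and c S \<subseteq> I
  for some nonzero c in R, i.e. finitely generated of full rank).\<close>
definition qfrac_ideal :: "'k::field set \<Rightarrow> 'k set \<Rightarrow> 'k \<Rightarrow> 'k \<Rightarrow> ('k \<times> 'k) set \<Rightarrow> bool" where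
  "qfrac_ideal R A t n I \<longleftrightarrow> (0, 0) \<in> I \<and> (\<forall>z\<in>I. \<forall>w\<in>I. qadd z w \<in> I) \<and>
     (\<forall>\<sigma>\<in>Sset R A. \<forall>z\<in>I. qmul t n \<sigma> z \<in> I) \<and>
     (\<exists>c\<in>R. c \<noteq> 0 \<and> (\<forall>z\<in>I. qscal c z \<in> Sset R A) \<and> (\<forall>\<sigma>\<in>Sset R A. qscal c \<sigma> \<in> I))"

text \<open>Module index [M:N]_R of lattices in K^2: the R-module generated by determinants of
  K-linear maps \<phi> with \<phi>(M) \<subseteq> N; \<phi> = (p,q,r,s) : (x,y) \<mapsto> (p x + q y, r x + s y).\<close>
definition module_index :: "'k::field set \<Rightarrow> ('k \<times> 'k) set \<Rightarrow> ('k \<times> 'k) set \<Rightarrow> 'k set" where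
  "module_index R M N = rspan R {p * s - q * r | p q r s.
      \<forall>z\<in>M. (p * fst z + q * snd z, r * fst z + s * snd z) \<in> N}"

definition balanced_quadruple ::
  "'k::field set \<Rightarrow> 'k set \<Rightarrow> 'k \<Rightarrow> 'k \<Rightarrow> ('k \<times> 'k) set \<Rightarrow> 'k \<times> 'k \<Rightarrow> 'k \<Rightarrow> bool" where
  "balanced_quadruple R A t n I \<delta> s \<longleftrightarrow>
     quad_alg R A t n \<and> qdisc t n \<noteq> 0 \<and> qfrac_ideal R A t n I \<and> qunit t n \<delta> \<and> s \<noteq> 0 \<and>
     (\<forall>z1\<in>I. \<forall>z2\<in>I. \<forall>z3\<in>I. \<exists>\<sigma>\<in>Sset R A. qmul t n z1 (qmul t n z2 z3) = qmul t n \<delta> \<sigma>) \<and>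
     module_index R (Sset R A) I = {s * r | r. r \<in> R} \<and>
     s ^ 3 = qnorm t n \<delta>"

text \<open>C(x,y) = \<open>\<pi>\<^sub>K(1 \<and> (\<alpha>x+\<beta>y)^3 \<delta>^{-1})\<close>, expanded into coefficients.\<close>
definition Phi_form :: "'k::field \<Rightarrow> 'k \<Rightarrow> 'k \<times> 'k \<Rightarrow> 'k \<times> 'k \<Rightarrow> 'k \<times> 'k \<Rightarrow> 'k bcf" where
  "Phi_form t n \<delta> \<alpha> \<beta> =
    (let m = qmul t n; di = qinv t n \<delta>; p = (\<lambda>z. qpi (1, 0) z) in
     (p (m (m \<alpha> (m \<alpha> \<alpha>)) di),
      3 * p (m (m \<alpha> (m \<alpha> \<beta>)) di),
      3 * p (m (m \<alpha> (m \<beta> \<beta>)) di),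
      p (m (m \<beta> (m \<beta> \<beta>)) di)))"

text \<open>\<open>\<Phi>\<^sub>\<aa>(S,I,\<delta>,s)\<close> is the orbit of f: for a decomposition I = R\<alpha> + \<aa>\<beta> with
  \<open>\<pi>\<^sub>K(\<alpha>\<and>\<beta>) = s\<close>, the form C lies in SL(R\<oplus>\<aa>)\<cdot>f.\<close>
definition Phi_is_orbit_of ::
  "'k::field set \<Rightarrow> 'k set \<Rightarrow> 'k \<Rightarrow> 'k \<Rightarrow> ('k \<times> 'k) set \<Rightarrow> 'k \<times> 'k \<Rightarrow> 'k \<Rightarrow> 'k bcf \<Rightarrow> bool" where
  "Phi_is_orbit_of R A t n I \<delta> s f \<longleftrightarrow>
     (\<exists>\<alpha> \<beta>. I = {qadd (qscal r \<alpha>) (qscal a \<beta>) | r a. r \<in> R \<and> a \<in> A} \<and> qpi \<alpha> \<beta> = s \<and>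
        (\<exists>g\<in>SL_Ra R A. Phi_form t n \<delta> \<alpha> \<beta> = bcf_act g f))"

end

theory Submission imports Defs begin

lemma qmul_comm: "qmul t n z w = qmul t n w z"
  by (simp add: qmul_def algebra_simps)
lemma qmul_assoc: "qmul t n (qmul t n z w) u = qmul t n z (qmul t n w u)"
  by (simp add: qmul_def prod_eq_iff algebra_simps)
lemma qmul_one: "qmul t n (1,0) z = z"
  by (simp add: qmul_def)
lemma qmul_scal: "qmul t n (qscal c z) w = qscal c (qmul t n z w)"
  by (simp add: qmul_def qscal_def algebra_simps)
lemma qnorm_mult: "qnorm t n (qmul t n z w) = qnorm t n z * qnorm t n w"
  by (simp add: qmul_def qnorm_def power2_eq_square algebra_simps)
lemma qnorm_scal: "qnorm t n (qscal c z) = c^2 * qnorm t n z"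
  by (simp add: qscal_def qnorm_def power2_eq_square algebra_simps)
lemma qinv_right: assumes N: "qnorm t n z \<noteq> 0" shows "qmul t n z (qinv t n z) = (1,0)"
proof -
  obtain a b where z: "z = (a,b)" by (cases z)
  define M where "M = a^2 + t*a*b + n*b^2"
  have N': "M \<noteq> 0" using N by (simp add: z qnorm_def M_def)
  have "a * ((a + t*b) / M) - n * b * (- b / M) = (a*(a+t*b) + n*b*b) / M"
    using N' by (simp add: field_simps)
  also have "a*(a+t*b) + n*b*b = M" by (simp add: M_def power2_eq_square algebra_simps)
  finally have "a * ((a + t*b) / M) - n * b * (- b / M) = M / M" .
  then have 1: "a * ((a + t*b) / M) - n * b * (- b / M) = 1" using N' by simp
  have 2: "a * (- b / M) + b * ((a + t*b) / M) + t * b * (- b / M) = 0"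
    by (simp add: diff_divide_distrib add_divide_distrib algebra_simps)
  show ?thesis using 1 2 by (simp add: z qmul_def qinv_def qnorm_def M_def)
qed
lemma qunit_norm: "qunit t n z \<Longrightarrow> qnorm t n z \<noteq> 0"
proof -
  assume "qunit t n z" then obtain w where "qmul t n z w = (1,0)" by (auto simp: qunit_def)
  then have "qnorm t n z * qnorm t n w = qnorm t n (1,0)" by (metis qnorm_mult)
  then have "qnorm t n z * qnorm t n w = 1" by (simp add: qnorm_def)
  then show ?thesis by auto
qed

lemma phi_eval:
  "bcf_eval (Phi_form t n \<delta> \<alpha> \<beta>) x y =
   snd (qmul t n (qmul t n (qadd (qscal x \<alpha>) (qscal y \<beta>)) (qmul t n (qadd (qscal x \<alpha>) (qscal y \<beta>)) (qadd (qscal x \<alpha>) (qscal y \<beta>)))) (qinv t n \<delta>))"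
proof -
  obtain a1 a2 b1 b2 e1 e2 where e: "\<alpha> = (a1,a2)" "\<beta> = (b1,b2)" "qinv t n \<delta> = (e1,e2)"
    by (metis prod.exhaust)
  show ?thesis unfolding Phi_form_def Let_def e
    by (simp add: qmul_def qpi_def qadd_def qscal_def power2_eq_square power3_eq_cube algebra_simps)
qed

lemma nil3: "qdisc t n \<noteq> 0 \<Longrightarrow> qmul t n z (qmul t n z z) = (0,0) \<Longrightarrow> z = (0,0)"
proof -
  assume d: "qdisc t n \<noteq> 0" and z3: "qmul t n z (qmul t n z z) = (0,0)"
  obtain x y where z: "z = (x,y)" by (cases z)
  have N0: "qnorm t n z = 0"
    using qnorm_mult[of t n z "qmul t n z z"] qnorm_mult[of t n z z] z3
    by (simp add: qnorm_def)
  have sq: "qmul t n z z = qscal (2*x + t*y) z"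
    using N0 by (simp add: z qmul_def qscal_def qnorm_def power2_eq_square algebra_simps prod_eq_iff)
  have "qmul t n z (qmul t n z z) = qscal (2*x+t*y) (qmul t n z z)"
    using sq by (metis qmul_comm qmul_scal)
  also have "\<dots> = qscal ((2*x+t*y)^2) z" using sq by (simp add: qscal_def power2_eq_square)
  finally have "qmul t n z (qmul t n z z) = qscal ((2*x+t*y)^2) z" .
  then have disj: "(2*x+t*y) = 0 \<or> z = (0,0)" using z3 by (auto simp: qscal_def z)
  have e: "qdisc t n * y^2 = (2*x+t*y)^2 - 4 * qnorm t n z"
    by (simp add: qdisc_def qnorm_def z power2_eq_square algebra_simps)
  show ?thesis using disj
  proof (elim disjE)
    assume h: "2*x+t*y = 0"
    have "qdisc t n * y^2 = 0" using h N0 e by simp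
    then have y0: "y = 0" using d by simp
    then have "x^2 = 0" using N0 by (simp add: z qnorm_def)
    then show ?thesis using y0 z by simp
  qed simp
qed
lemma cube_scal: "qmul t n (qscal c z) (qmul t n (qscal c z) (qscal c z)) = qscal (c^3) (qmul t n z (qmul t n z z))"
  by (simp add: qmul_def qscal_def power3_eq_cube algebra_simps)

lemma lin_inj: assumes "qpi \<alpha> \<beta> \<noteq> 0" "qadd (qscal x \<alpha>) (qscal y \<beta>) = (0,0)" shows "x = 0 \<and> y = 0"
proof -
  obtain a1 a2 b1 b2 where e: "\<alpha> = (a1,a2)" "\<beta> = (b1,b2)" by (metis prod.exhaust)
  have h: "x*a1 + y*b1 = 0" "x*a2+y*b2 = 0" using assms(2) by (auto simp: e qadd_def qscal_def)
  have "x * qpi \<alpha> \<beta> = b2*(x*a1 + y*b1) - b1*(x*a2+y*b2)" by (simp add: e qpi_def algebra_simps)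
  moreover have "y * qpi \<alpha> \<beta> = a1*(x*a2+y*b2) - a2*(x*a1 + y*b1)" by (simp add: e qpi_def algebra_simps)
  ultimately have "x * qpi \<alpha> \<beta> = 0" "y * qpi \<alpha> \<beta> = 0" using h by simp_all
  then show ?thesis using assms(1) by simp
qed

lemma lin_surj: assumes "qpi \<alpha> \<beta> \<noteq> 0"
  shows "qadd (qscal (qpi \<gamma> \<beta> / qpi \<alpha> \<beta>) \<alpha>) (qscal (qpi \<alpha> \<gamma> / qpi \<alpha> \<beta>) \<beta>) = \<gamma>"
proof -
  obtain a1 a2 b1 b2 g1 g2 where e: "\<alpha> = (a1,a2)" "\<beta> = (b1,b2)" "\<gamma> = (g1,g2)" by (metis prod.exhaust)
  obtain D where D: "D = a1*b2 - a2*b1" by simp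
  have ne: "D \<noteq> 0" using assms by (simp add: e qpi_def D)
  have "(g1*b2 - g2*b1) / D * a1 + (a1*g2 - a2*g1) / D * b1 = ((g1*b2 - g2*b1) * a1 + (a1*g2 - a2*g1) * b1) / D"
    by (simp add: add_divide_distrib)
  also have "(g1*b2 - g2*b1) * a1 + (a1*g2 - a2*g1) * b1 = g1 * D" by (simp add: D algebra_simps)
  finally have 1: "(g1*b2 - g2*b1) / D * a1 + (a1*g2 - a2*g1) / D * b1 = g1" using ne by simp
  have "(g1*b2 - g2*b1) / D * a2 + (a1*g2 - a2*g1) / D * b2 = ((g1*b2 - g2*b1) * a2 + (a1*g2 - a2*g1) * b2) / D"
    by (simp add: add_divide_distrib)
  also have "(g1*b2 - g2*b1) * a2 + (a1*g2 - a2*g1) * b2 = g2 * D" by (simp add: D algebra_simps)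
  finally have 2: "(g1*b2 - g2*b1) / D * a2 + (a1*g2 - a2*g1) / D * b2 = g2" using ne by simp
  show ?thesis using 1 2 by (simp add: e qpi_def qadd_def qscal_def D[symmetric])
qed


theorem mainTheorem7:
  fixes R A :: "'k::field set" and a b c d t n s :: 'k
    and I :: "('k \<times> 'k) set" and \<delta> :: "'k \<times> 'k"
  assumes "dedekind_with_frac_field R"
    and "(3::'k) \<noteq> 0"
    and "frac_ideal R A"
    and "a \<in> A" and "b \<in> R" and "c \<in> frac_inv R A" and "d \<in> frac_inv2 R A"
    and "bcf_disc a b c d \<noteq> 0"
    and "balanced_quadruple R A t n I \<delta> s"
    and "Phi_is_orbit_of R A t n I \<delta> s (Vform a b c d)"
  shows "(\<exists>x0 y0. (x0, y0) \<noteq> (0, 0) \<and> bcf_eval (Vform a b c d) x0 y0 = 0) \<longleftrightarrow>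
         (\<exists>\<gamma>. qunit t n \<gamma> \<and> \<delta> = qmul t n \<gamma> (qmul t n \<gamma> \<gamma>))"
proof -
  let ?F = "Vform a b c d"
  let ?m = "qmul t n"
  have dsc: "qdisc t n \<noteq> 0" and ud: "qunit t n \<delta>" and s0: "s \<noteq> 0" and s3: "s^3 = qnorm t n \<delta>"
    using assms(9) by (auto simp: balanced_quadruple_def)
  obtain \<alpha> \<beta> g where pi: "qpi \<alpha> \<beta> = s" and gS: "g \<in> SL_Ra R A"
    and PF: "Phi_form t n \<delta> \<alpha> \<beta> = bcf_act g ?F"
    using assms(10) by (auto simp: Phi_is_orbit_of_def)
  obtain r u v s' where g: "g = (r,u,v,s')" and det: "r*s' - u*v = 1"
    using gS by (auto simp: SL_Ra_def)
  define D where "D = qinv t n \<delta>"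
  have Nd: "qnorm t n \<delta> \<noteq> 0" using ud by (rule qunit_norm)
  have dD: "?m \<delta> D = (1,0)" using qinv_right[OF Nd] by (simp add: D_def)
  define lin where "lin x y = qadd (qscal x \<alpha>) (qscal y \<beta>)" for x y
  have key: "bcf_eval ?F (r*x+v*y) (u*x+s'*y) = snd (?m (?m (lin x y) (?m (lin x y) (lin x y))) D)" for x y
  proof -
    have "bcf_eval ?F (r*x+v*y) (u*x+s'*y) = bcf_eval (bcf_act g ?F) x y"
      using bcf_act_eval[of r u v s' ?F x y] det by (simp add: g)
    also have "\<dots> = bcf_eval (Phi_form t n \<delta> \<alpha> \<beta>) x y" using PF by simp
    finally show ?thesis by (simp add: phi_eval lin_def D_def)
  qed
  show ?thesis
  proof
    assume "\<exists>x0 y0. (x0, y0) \<noteq> (0, 0) \<and> bcf_eval ?F x0 y0 = 0"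
    then obtain x0 y0 where nz: "(x0, y0) \<noteq> (0, 0)" and f0: "bcf_eval ?F x0 y0 = 0" by blast
    define x where "x = s'*x0 - v*y0"
    define y where "y = - u*x0 + r*y0"
    have ex: "r*x+v*y = x0" "u*x+s'*y = y0"
    proof -
      have "r*x+v*y = (r*s'-u*v)*x0" by (simp add: x_def y_def algebra_simps)
      then show "r*x+v*y = x0" using det by simp
      have "u*x+s'*y = (r*s'-u*v)*y0" by (simp add: x_def y_def algebra_simps)
      then show "u*x+s'*y = y0" using det by simp
    qed
    define z where "z = lin x y"
    have z0: "z \<noteq> (0,0)"
    proof
      assume "z = (0,0)"
      then have "x = 0 \<and> y = 0" using lin_inj[of \<alpha> \<beta> x y] pi s0 by (simp add: z_def lin_def)
      then show False using ex nz by auto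
    qed
    have c0: "snd (?m (?m z (?m z z)) D) = 0" using key[of x y] ex f0 by (simp add: z_def)
    define k where "k = fst (?m (?m z (?m z z)) D)"
    have zk: "?m (?m z (?m z z)) D = qscal k (1,0)"
      using c0 by (simp add: k_def qscal_def prod_eq_iff)
    have cz: "?m z (?m z z) = qscal k \<delta>"
    proof -
      have Dd: "?m D \<delta> = (1,0)" using dD by (simp only: qmul_comm)
      have "?m z (?m z z) = ?m (?m z (?m z z)) (?m D \<delta>)"
        unfolding Dd by (simp only: qmul_comm[of t n _ "(1,0)"] qmul_one)
      also have "\<dots> = ?m (qscal k (1,0)) \<delta>" unfolding zk[symmetric] qmul_assoc by (rule refl)
      also have "\<dots> = qscal k \<delta>" by (simp add: qmul_scal qmul_one)
      finally show ?thesis .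
    qed
    have k0: "k \<noteq> 0"
    proof
      assume "k = 0"
      then have "?m z (?m z z) = (0,0)" using cz by (simp add: qscal_def)
      then show False using nil3[OF dsc] z0 by blast
    qed
    define M where "M = qnorm t n z / s"
    have "qnorm t n z ^ 3 = k^2 * s^3"
    proof -
      have "qnorm t n z ^ 3 = qnorm t n (?m z (?m z z))" by (simp add: qnorm_mult power3_eq_cube)
      also have "\<dots> = k^2 * s^3" using cz s3 by (simp add: qnorm_scal)
      finally show ?thesis .
    qed
    then have M3: "M^3 = k^2" using s0 by (simp add: M_def power_divide)
    define \<gamma> where "\<gamma> = qscal (M/k) z"
    have g3: "?m \<gamma> (?m \<gamma> \<gamma>) = \<delta>"
    proof -
      have "?m \<gamma> (?m \<gamma> \<gamma>) = qscal ((M/k)^3) (qscal k \<delta>)" by (simp add: \<gamma>_def cube_scal cz)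
      also have "(M/k)^3 * k = 1" using M3 k0 by (simp add: power_divide power2_eq_square power3_eq_cube)
      then have "qscal ((M/k)^3) (qscal k \<delta>) = \<delta>" by (simp add: qscal_def mult.assoc[symmetric])
      finally show ?thesis .
    qed
    have "qunit t n \<gamma>"
      unfolding qunit_def
    proof
      have "?m \<gamma> (?m (?m \<gamma> \<gamma>) D) = ?m (?m \<gamma> (?m \<gamma> \<gamma>)) D" by (simp only: qmul_assoc)
      then show "?m \<gamma> (?m (?m \<gamma> \<gamma>) D) = (1,0)" using g3 dD by simp
    qed
    then show "\<exists>\<gamma>. qunit t n \<gamma> \<and> \<delta> = ?m \<gamma> (?m \<gamma> \<gamma>)" using g3 by (intro exI[of _ \<gamma>]) simp
  next
    assume "\<exists>\<gamma>. qunit t n \<gamma> \<and> \<delta> = ?m \<gamma> (?m \<gamma> \<gamma>)"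
    then obtain \<gamma> where ug: "qunit t n \<gamma>" and dg: "\<delta> = ?m \<gamma> (?m \<gamma> \<gamma>)" by blast
    have g0: "\<gamma> \<noteq> (0,0)" using qunit_norm[OF ug] by (auto simp: qnorm_def)
    define x where "x = qpi \<gamma> \<beta> / qpi \<alpha> \<beta>"
    define y where "y = qpi \<alpha> \<gamma> / qpi \<alpha> \<beta>"
    have lg: "lin x y = \<gamma>" using lin_surj[of \<alpha> \<beta> \<gamma>] pi s0 by (simp add: lin_def x_def y_def)
    have xy0: "(x,y) \<noteq> (0,0)" using lg g0 by (auto simp: lin_def qadd_def qscal_def)
    have "bcf_eval ?F (r*x+v*y) (u*x+s'*y) = 0" using key[of x y] lg dg dD by simp
    moreover have "(r*x+v*y, u*x+s'*y) \<noteq> (0,0)"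
    proof
      assume h: "(r*x+v*y, u*x+s'*y) = (0,0)"
      have "s'*(r*x+v*y) - v*(u*x+s'*y) = (r*s'-u*v)*x" by (simp add: algebra_simps)
      then have "x = s'*(r*x+v*y) - v*(u*x+s'*y)" using det by simp
      moreover have "r*(u*x+s'*y) - u*(r*x+v*y) = (r*s'-u*v)*y" by (simp add: algebra_simps)
      then have "y = r*(u*x+s'*y) - u*(r*x+v*y)" using det by simp
      ultimately show False using h xy0 by simp
    qed
    ultimately show "\<exists>x0 y0. (x0, y0) \<noteq> (0, 0) \<and> bcf_eval ?F x0 y0 = 0" by blast
  qed
qed

end
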